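(* Let $X$ be a finite-dimensional real vector space, $\phi:X\to\mathbf{R}$ a strictly convex norm, $K\subseteq X$ closed, $0<s<t<\infty$, $1<\lambda<\infty$, and $K_{\lambda,s,t}=\{x:\rho^\phi_K(x)\ge\lambda,\ s\le\delta^\phi_K(x)\le t\}$. Then $\xi^\phi_K$ is single-valued on $K_{\lambda,s,t}$ and $\xi^\phi_K|K_{\lambda,s,t}$ is uniformly continuous.
   Context: A norm $\phi$ is strictly convex if $\phi(a+b)=\phi(a)+\phi(b)$ implies $\phi(b)a=\phi(a)b$. For closed $K$: $\delta^\phi_K(x)=\inf\{\phi(y-x):y\in K\}$; $\xi^\phi_K(x)=K\cap\{w:\phi(x-w)=\delta^\phi_K(x)\}$; $\rho^\phi_K(x)=\sup\bigl(\mathbf{R}\cap\{s':\delta^\phi_K(w+s'(x-w))=s'\delta^\phi_K(x)\}\bigr)$ for any $w\in\xi^\phi_K(x)$ (independent of the choice of $w$). *)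

theory Defs
  imports "HOL-Analysis.Analysis"
begin

definition is_norm :: "('a::real_vector \<Rightarrow> real) \<Rightarrow> bool" where
  "is_norm \<phi> \<longleftrightarrow>
     (\<forall>x. 0 \<le> \<phi> x) \<and> (\<forall>x. \<phi> x = 0 \<longleftrightarrow> x = 0) \<and>
     (\<forall>c x. \<phi> (c *\<^sub>R x) = \<bar>c\<bar> * \<phi> x) \<and>
     (\<forall>x y. \<phi> (x + y) \<le> \<phi> x + \<phi> y)"

definition strictly_convex_norm :: "('a::real_vector \<Rightarrow> real) \<Rightarrow> bool" where
  "strictly_convex_norm \<phi> \<longleftrightarrow> is_norm \<phi> \<and>
     (\<forall>a b. \<phi> (a + b) = \<phi> a + \<phi> b \<longrightarrow> \<phi> b *\<^sub>R a = \<phi> a *\<^sub>R b)"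

definition phi_dist :: "('a::real_vector \<Rightarrow> real) \<Rightarrow> 'a set \<Rightarrow> 'a \<Rightarrow> real" where
  "phi_dist \<phi> K x = Inf {\<phi> (y - x) | y. y \<in> K}"

definition phi_proj :: "('a::real_vector \<Rightarrow> real) \<Rightarrow> 'a set \<Rightarrow> 'a \<Rightarrow> 'a set" where
  "phi_proj \<phi> K x = K \<inter> {w. \<phi> (x - w) = phi_dist \<phi> K x}"

definition phi_reach :: "('a::real_vector \<Rightarrow> real) \<Rightarrow> 'a set \<Rightarrow> 'a \<Rightarrow> ereal" where
  "phi_reach \<phi> K x =
     (let w = (SOME w. w \<in> phi_proj \<phi> K x) in
      Sup (ereal ` {s'::real. phi_dist \<phi> K (w + s' *\<^sub>R (x - w)) = s' * phi_dist \<phi> K x}))"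

end

theory Submission
  imports Defs
begin

lemma nrm_nonneg: "is_norm \<phi> \<Longrightarrow> 0 \<le> \<phi> x" by (simp add: is_norm_def)
lemma nrm_zero: "is_norm \<phi> \<Longrightarrow> \<phi> x = 0 \<longleftrightarrow> x = 0" by (simp add: is_norm_def)
lemma nrm_scale: "is_norm \<phi> \<Longrightarrow> \<phi> (c *\<^sub>R x) = \<bar>c\<bar> * \<phi> x" by (simp add: is_norm_def)
lemma nrm_tri: "is_norm \<phi> \<Longrightarrow> \<phi> (x + y) \<le> \<phi> x + \<phi> y" by (simp add: is_norm_def)
lemma nrm_minus: "is_norm \<phi> \<Longrightarrow> \<phi> (- x) = \<phi> x"
  using nrm_scale[of \<phi> "-1" x] by simp
lemma nrm_sym: "is_norm \<phi> \<Longrightarrow> \<phi> (x - y) = \<phi> (y - x)"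
  using nrm_minus[of \<phi> "y - x"] by simp
lemma nrm_tri_diff: "is_norm \<phi> \<Longrightarrow> \<phi> (x - y) \<le> \<phi> (x - z) + \<phi> (z - y)"
  using nrm_tri[of \<phi> "x - z" "z - y"] by simp
lemma nrm_rev: "is_norm \<phi> \<Longrightarrow> \<bar>\<phi> x - \<phi> y\<bar> \<le> \<phi> (x - y)"
  using nrm_tri[of \<phi> "x - y" y] nrm_tri[of \<phi> "y - x" x] nrm_sym[of \<phi> x y] by auto

lemma nrm_sum: assumes "is_norm \<phi>" "finite A" shows "\<phi> (sum f A) \<le> (\<Sum>a\<in>A. \<phi> (f a))"
  using assms(2)
proof (induction A rule: finite_induct)
  case empty then show ?case using nrm_zero[OF assms(1), of 0] by simp
next
  case (insert x F)
  then show ?case using assms(1) nrm_tri[of \<phi> "f x" "sum f F"] by simp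
qed

lemma nrm_upper:
  fixes \<phi> :: "'a::euclidean_space \<Rightarrow> real"
  assumes "is_norm \<phi>"
  shows "\<exists>C>0. \<forall>x. \<phi> x \<le> C * norm x"
proof -
  define C where "C = (\<Sum>b\<in>(Basis::'a set). \<phi> b) + 1"
  have C0: "(\<Sum>b\<in>(Basis::'a set). \<phi> b) \<ge> 0" by (rule sum_nonneg) (simp add: nrm_nonneg assms)
  have "\<phi> x \<le> C * norm x" for x
  proof -
    have "\<phi> x = \<phi> (\<Sum>b\<in>Basis. inner x b *\<^sub>R b)" by (simp add: euclidean_representation)
    also have "\<dots> \<le> (\<Sum>b\<in>Basis. \<phi> (inner x b *\<^sub>R b))" by (rule nrm_sum[OF assms]) simp
    also have "\<dots> = (\<Sum>b\<in>Basis. \<bar>inner x b\<bar> * \<phi> b)" by (simp add: nrm_scale[OF assms])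
    also have "\<dots> \<le> (\<Sum>b\<in>Basis. norm x * \<phi> b)"
      by (rule sum_mono) (simp add: Basis_le_norm mult_right_mono nrm_nonneg[OF assms])
    also have "\<dots> \<le> C * norm x" using C0 by (simp add: C_def sum_distrib_left[symmetric] algebra_simps)
    finally show ?thesis .
  qed
  moreover have "C > 0" using C0 by (simp add: C_def)
  ultimately show ?thesis by blast
qed

lemma nrm_cont:
  fixes \<phi> :: "'a::euclidean_space \<Rightarrow> real"
  assumes "is_norm \<phi>"
  shows "continuous_on UNIV \<phi>"
proof -
  obtain C where C: "C > 0" "\<And>x. \<phi> x \<le> C * norm x" using nrm_upper[OF assms] by blast
  have "lipschitz_on C UNIV \<phi>"
    unfolding lipschitz_on_def
  proof (intro conjI ballI)
    fix x y :: 'a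
    have "dist (\<phi> x) (\<phi> y) \<le> \<phi> (x - y)" using nrm_rev[OF assms, of x y] by (simp add: dist_real_def)
    also have "\<dots> \<le> C * dist x y" using C(2)[of "x - y"] by (simp add: dist_norm)
    finally show "dist (\<phi> x) (\<phi> y) \<le> C * dist x y" .
  qed (use C in auto)
  then show ?thesis by (rule lipschitz_on_continuous_on)
qed

lemma nrm_cont_comp:
  fixes \<phi> :: "'a::euclidean_space \<Rightarrow> real"
  assumes "is_norm \<phi>" "continuous_on S f"
  shows "continuous_on S (\<lambda>x. \<phi> (f x))"
  using continuous_on_compose2[OF nrm_cont[OF assms(1)] assms(2)] by simp

lemma nrm_lower:
  fixes \<phi> :: "'a::euclidean_space \<Rightarrow> real"
  assumes "is_norm \<phi>"
  shows "\<exists>c>0. \<forall>x. c * norm x \<le> \<phi> x"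
proof -
  have "sphere (0::'a) 1 \<noteq> {}" by simp
  then obtain p where p: "p \<in> sphere (0::'a) 1" "\<forall>y\<in>sphere 0 1. \<phi> p \<le> \<phi> y"
    using continuous_attains_inf[OF compact_sphere _ continuous_on_subset[OF nrm_cont[OF assms]]]
    by blast
  have "p \<noteq> 0" using p(1) by auto
  then have c0: "\<phi> p > 0" using nrm_zero[OF assms, of p] nrm_nonneg[OF assms, of p] by linarith
  have "\<phi> p * norm x \<le> \<phi> x" for x
  proof (cases "x = 0")
    case True then show ?thesis by (simp add: nrm_nonneg[OF assms])
  next
    case False
    have "\<phi> p \<le> \<phi> (inverse (norm x) *\<^sub>R x)" using p(2) False by simp
    also have "\<dots> = \<phi> x / norm x" using nrm_scale[OF assms] by (simp add: divide_inverse mult.commute)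
    finally show ?thesis using False by (simp add: field_simps)
  qed
  then show ?thesis using c0 by blast
qed


lemma near_exists:
  fixes \<phi> :: "'a::euclidean_space \<Rightarrow> real"
  assumes N: "is_norm \<phi>" and K: "closed K" "K \<noteq> {}"
  shows "\<exists>w\<in>K. \<forall>y\<in>K. \<phi> (w - x) \<le> \<phi> (y - x)"
proof -
  obtain c where c: "c > 0" "\<And>x. c * norm x \<le> \<phi> x" using nrm_lower[OF N] by blast
  obtain y0 where y0: "y0 \<in> K" using K by blast
  define R where "R = \<phi> (y0 - x) / c"
  have "y0 \<in> cball x R" using c(2)[of "y0 - x"] c(1) by (simp add: R_def dist_norm field_simps norm_minus_commute)
  then have ne: "K \<inter> cball x R \<noteq> {}" using y0 by blast
  have cp: "compact (K \<inter> cball x R)" using K(1) by (simp add: compact_Int_closed closed_Int_compact)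
  have ct: "continuous_on (K \<inter> cball x R) (\<lambda>y. \<phi> (y - x))"
    by (rule nrm_cont_comp[OF N]) (intro continuous_intros)
  obtain w where w: "w \<in> K \<inter> cball x R" "\<forall>y\<in>K \<inter> cball x R. \<phi> (w - x) \<le> \<phi> (y - x)"
    using continuous_attains_inf[OF cp ne ct] by blast
  have "\<phi> (w - x) \<le> \<phi> (y - x)" if "y \<in> K" for y
  proof (cases "y \<in> cball x R")
    case True then show ?thesis using w that by blast
  next
    case False
    then have "R < norm (y - x)" by (simp add: dist_norm norm_minus_commute)
    then have "\<phi> (y0 - x) < c * norm (y - x)" using c(1) by (simp add: R_def field_simps)
    also have "\<dots> \<le> \<phi> (y - x)" by (rule c(2))
    finally have "\<phi> (y0 - x) < \<phi> (y - x)" .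
    moreover have "\<phi> (w - x) \<le> \<phi> (y0 - x)" using w(2) y0 \<open>y0 \<in> cball x R\<close> by blast
    ultimately show ?thesis by linarith
  qed
  then show ?thesis using w by blast
qed

lemma pd_bdd: "is_norm \<phi> \<Longrightarrow> bdd_below {\<phi> (y - x) | y. y \<in> K}"
  by (rule bdd_belowI[of _ 0]) (auto simp: nrm_nonneg)

lemma pd_le: "is_norm \<phi> \<Longrightarrow> y \<in> K \<Longrightarrow> phi_dist \<phi> K x \<le> \<phi> (y - x)"
  unfolding phi_dist_def by (rule cInf_lower) (auto simp: pd_bdd)

lemma pd_eq: "w \<in> K \<Longrightarrow> \<forall>y\<in>K. \<phi> (w - x) \<le> \<phi> (y - x) \<Longrightarrow> phi_dist \<phi> K x = \<phi> (w - x)"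
  unfolding phi_dist_def by (rule cInf_eq_minimum) auto

lemma pd_near:
  fixes \<phi> :: "'a::euclidean_space \<Rightarrow> real"
  assumes N: "is_norm \<phi>" and K: "closed K" "K \<noteq> {}"
  shows "\<exists>w\<in>K. phi_dist \<phi> K x = \<phi> (x - w)"
  using near_exists[OF assms, of x] pd_eq[of _ K \<phi> x] nrm_sym[OF N] by metis

lemma pd_nonneg:
  fixes \<phi> :: "'a::euclidean_space \<Rightarrow> real"
  assumes N: "is_norm \<phi>" and K: "closed K" "K \<noteq> {}"
  shows "0 \<le> phi_dist \<phi> K x"
  using pd_near[OF assms, of x] nrm_nonneg[OF N] by metis

lemma pd_lip:
  fixes \<phi> :: "'a::euclidean_space \<Rightarrow> real"
  assumes N: "is_norm \<phi>" and K: "closed K" "K \<noteq> {}"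
  shows "phi_dist \<phi> K z \<le> phi_dist \<phi> K y + \<phi> (z - y)"
proof -
  obtain w where w: "w \<in> K" "phi_dist \<phi> K y = \<phi> (y - w)" using pd_near[OF assms, of y] by blast
  have "phi_dist \<phi> K z \<le> \<phi> (w - z)" by (rule pd_le[OF N w(1)])
  also have "\<dots> \<le> \<phi> (w - y) + \<phi> (y - z)" by (rule nrm_tri_diff[OF N])
  finally show ?thesis using w(2) nrm_sym[OF N, of y w] nrm_sym[OF N, of y z] by simp
qed

lemma proj_ne:
  fixes \<phi> :: "'a::euclidean_space \<Rightarrow> real"
  assumes N: "is_norm \<phi>" and K: "closed K" "K \<noteq> {}"
  shows "\<exists>w. w \<in> phi_proj \<phi> K x"
  using pd_near[OF assms, of x] unfolding phi_proj_def by auto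


lemma sc_modulus:
  fixes \<phi> :: "'a::euclidean_space \<Rightarrow> real"
  assumes N: "is_norm \<phi>"
    and SC: "\<forall>a b. \<phi> (a + b) = \<phi> a + \<phi> b \<longrightarrow> \<phi> b *\<^sub>R a = \<phi> a *\<^sub>R b"
    and e: "\<epsilon> > 0"
  shows "\<exists>\<gamma>>0. \<forall>a b. \<phi> a \<le> M \<longrightarrow> \<phi> b \<le> M \<longrightarrow> \<phi> a + \<phi> b - \<phi> (a + b) < \<gamma>
           \<longrightarrow> \<phi> (\<phi> b *\<^sub>R a - \<phi> a *\<^sub>R b) < \<epsilon>"
proof -
  obtain c where c: "c > 0" "\<And>x. c * norm x \<le> \<phi> x" using nrm_lower[OF N] by blast
  define D where "D = {p::'a\<times>'a. \<phi> (fst p) \<le> M} \<inter> {p. \<phi> (snd p) \<le> M}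
     \<inter> {p. \<epsilon> \<le> \<phi> (\<phi> (snd p) *\<^sub>R fst p - \<phi> (fst p) *\<^sub>R snd p)}"
  have cf: "continuous_on UNIV (\<lambda>p::'a\<times>'a. \<phi> (fst p))"
    by (rule nrm_cont_comp[OF N]) (intro continuous_intros)
  have cs: "continuous_on UNIV (\<lambda>p::'a\<times>'a. \<phi> (snd p))"
    by (rule nrm_cont_comp[OF N]) (intro continuous_intros)
  have cd: "continuous_on UNIV (\<lambda>p::'a\<times>'a. \<phi> (\<phi> (snd p) *\<^sub>R fst p - \<phi> (fst p) *\<^sub>R snd p))"
    by (rule nrm_cont_comp[OF N]) (intro continuous_intros cf cs)
  have cl: "closed D" unfolding D_def
    by (intro closed_Int closed_Collect_le cf cs cd continuous_intros)
  have bd: "bounded D" unfolding bounded_iff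
  proof (intro exI ballI)
    fix p assume "p \<in> D"
    then have "\<phi> (fst p) \<le> M" "\<phi> (snd p) \<le> M" by (auto simp: D_def)
    then have "c * norm (fst p) \<le> M" "c * norm (snd p) \<le> M" using c(2) by (meson order_trans)+
    then have "norm (fst p) \<le> M / c" "norm (snd p) \<le> M / c" using c(1) by (simp_all add: field_simps)
    then show "norm p \<le> 2 * (M / c)" using norm_Pair_le[of "fst p" "snd p"] by simp
  qed
  have cp: "compact D" using cl bd by (simp add: compact_eq_bounded_closed)
  show ?thesis
  proof (cases "D = {}")
    case True
    show ?thesis
    proof (intro exI[of _ 1] conjI allI impI)
      fix a b assume "\<phi> a \<le> M" "\<phi> b \<le> M"
      then have "(a, b) \<notin> D \<Longrightarrow> \<phi> (\<phi> b *\<^sub>R a - \<phi> a *\<^sub>R b) < \<epsilon>" by (auto simp: D_def)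
      then show "\<phi> (\<phi> b *\<^sub>R a - \<phi> a *\<^sub>R b) < \<epsilon>" using True by blast
    qed simp
  next
    case False
    have cg: "continuous_on D (\<lambda>p. \<phi> (fst p) + \<phi> (snd p) - \<phi> (fst p + snd p))"
      by (intro continuous_intros continuous_on_subset[OF cf] continuous_on_subset[OF cs]
          nrm_cont_comp[OF N]) auto
    obtain p0 where p0: "p0 \<in> D" "\<forall>q\<in>D. \<phi> (fst p0) + \<phi> (snd p0) - \<phi> (fst p0 + snd p0)
        \<le> \<phi> (fst q) + \<phi> (snd q) - \<phi> (fst q + snd q)"
      using continuous_attains_inf[OF cp False cg] by blast
    define \<gamma> where "\<gamma> = \<phi> (fst p0) + \<phi> (snd p0) - \<phi> (fst p0 + snd p0)"
    have "\<gamma> \<ge> 0" using nrm_tri[OF N, of "fst p0" "snd p0"] by (simp add: \<gamma>_def)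
    moreover have "\<gamma> \<noteq> 0"
    proof
      assume "\<gamma> = 0"
      then have "\<phi> (snd p0) *\<^sub>R fst p0 = \<phi> (fst p0) *\<^sub>R snd p0" using SC by (simp add: \<gamma>_def)
      then show False using p0(1) e nrm_zero[OF N, of 0] by (auto simp: D_def)
    qed
    ultimately have g0: "\<gamma> > 0" by simp
    show ?thesis
    proof (intro exI[of _ \<gamma>] conjI allI impI g0)
      fix a b assume ab: "\<phi> a \<le> M" "\<phi> b \<le> M" "\<phi> a + \<phi> b - \<phi> (a + b) < \<gamma>"
      have "(a, b) \<notin> D" using p0(2) ab(3) unfolding \<gamma>_def by force
      then show "\<phi> (\<phi> b *\<^sub>R a - \<phi> a *\<^sub>R b) < \<epsilon>" using ab by (auto simp: D_def)
    qed
  qed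
qed

lemma reach_interval:
  fixes \<phi> :: "'a::euclidean_space \<Rightarrow> real"
  assumes N: "is_norm \<phi>" and K: "closed K" "K \<noteq> {}"
    and w: "w \<in> phi_proj \<phi> K x" and r: "0 \<le> r" "r \<le> e"
    and eq: "phi_dist \<phi> K (w + e *\<^sub>R (x - w)) = e * phi_dist \<phi> K x"
  shows "phi_dist \<phi> K (w + r *\<^sub>R (x - w)) = r * phi_dist \<phi> K x"
proof -
  have wK: "w \<in> K" and wd: "\<phi> (x - w) = phi_dist \<phi> K x" using w by (auto simp: phi_proj_def)
  have "phi_dist \<phi> K (w + r *\<^sub>R (x - w)) \<le> \<phi> (w - (w + r *\<^sub>R (x - w)))" by (rule pd_le[OF N wK])
  also have "\<dots> = r * phi_dist \<phi> K x"
    using nrm_minus[OF N, of "r *\<^sub>R (x - w)"] nrm_scale[OF N, of r "x - w"] wd r by simp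
  finally have le: "phi_dist \<phi> K (w + r *\<^sub>R (x - w)) \<le> r * phi_dist \<phi> K x" .
  have "e * phi_dist \<phi> K x \<le> phi_dist \<phi> K (w + r *\<^sub>R (x - w))
           + \<phi> ((w + e *\<^sub>R (x - w)) - (w + r *\<^sub>R (x - w)))"
    using pd_lip[OF N K, of "w + e *\<^sub>R (x - w)" "w + r *\<^sub>R (x - w)"] eq by simp
  also have "(w + e *\<^sub>R (x - w)) - (w + r *\<^sub>R (x - w)) = (e - r) *\<^sub>R (x - w)"
    by (simp add: algebra_simps)
  also have "\<phi> ((e - r) *\<^sub>R (x - w)) = (e - r) * phi_dist \<phi> K x"
    using nrm_scale[OF N, of "e - r" "x - w"] wd r by simp
  finally have "r * phi_dist \<phi> K x \<le> phi_dist \<phi> K (w + r *\<^sub>R (x - w))" by (simp add: algebra_simps)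
  then show ?thesis using le by linarith
qed

lemma proj_single:
  fixes \<phi> :: "'a::euclidean_space \<Rightarrow> real"
  assumes N: "is_norm \<phi>"
    and SC: "\<forall>a b. \<phi> (a + b) = \<phi> a + \<phi> b \<longrightarrow> \<phi> b *\<^sub>R a = \<phi> a *\<^sub>R b"
    and K: "closed K" "K \<noteq> {}"
    and w: "w \<in> phi_proj \<phi> K x" and d: "phi_dist \<phi> K x > 0" and r: "r > 1"
    and eq: "phi_dist \<phi> K (w + r *\<^sub>R (x - w)) = r * phi_dist \<phi> K x"
    and w': "w' \<in> phi_proj \<phi> K x"
  shows "w' = w"
proof -
  define d0 where "d0 = phi_dist \<phi> K x"
  define y where "y = w + r *\<^sub>R (x - w)"
  have wd: "\<phi> (x - w) = d0" using w by (auto simp: phi_proj_def d0_def)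
  have wK': "w' \<in> K" and wd': "\<phi> (x - w') = d0" using w' by (auto simp: phi_proj_def d0_def)
  have yx: "y - x = (r - 1) *\<^sub>R (x - w)" by (simp add: y_def algebra_simps)
  have pyx: "\<phi> (y - x) = (r - 1) * d0" using yx nrm_scale[OF N, of "r - 1" "x - w"] wd r by simp
  have "r * d0 \<le> \<phi> (w' - y)" using pd_le[OF N wK', of y] eq by (simp add: y_def d0_def)
  also have "\<phi> (w' - y) = \<phi> ((y - x) + (x - w'))" using nrm_sym[OF N, of w' y] by simp
  finally have ge: "r * d0 \<le> \<phi> ((y - x) + (x - w'))" .
  have "\<phi> ((y - x) + (x - w')) \<le> \<phi> (y - x) + \<phi> (x - w')" by (rule nrm_tri[OF N])
  then have "\<phi> ((y - x) + (x - w')) = \<phi> (y - x) + \<phi> (x - w')" using ge pyx wd' by (simp add: algebra_simps)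
  then have "\<phi> (x - w') *\<^sub>R (y - x) = \<phi> (y - x) *\<^sub>R (x - w')" using SC by blast
  then have "d0 *\<^sub>R ((r - 1) *\<^sub>R (x - w)) = ((r - 1) * d0) *\<^sub>R (x - w')" using yx pyx wd' by simp
  then have "((r - 1) * d0) *\<^sub>R (x - w) = ((r - 1) * d0) *\<^sub>R (x - w')" by (simp add: mult.commute)
  moreover have "(r - 1) * d0 \<noteq> 0" using r d by (simp add: d0_def)
  ultimately have "x - w = x - w'" by simp
  then show ?thesis by simp
qed


lemma good:
  fixes \<phi> :: "'a::euclidean_space \<Rightarrow> real"
  assumes N: "is_norm \<phi>"
    and SC: "\<forall>a b. \<phi> (a + b) = \<phi> a + \<phi> b \<longrightarrow> \<phi> b *\<^sub>R a = \<phi> a *\<^sub>R b"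
    and K: "closed K" "K \<noteq> {}"
    and r: "1 < r" "ereal r < phi_reach \<phi> K x" and d: "phi_dist \<phi> K x > 0"
  shows "\<exists>w. phi_proj \<phi> K x = {w} \<and> phi_dist \<phi> K (w + r *\<^sub>R (x - w)) = r * phi_dist \<phi> K x"
proof -
  define w where "w = (SOME w. w \<in> phi_proj \<phi> K x)"
  have w: "w \<in> phi_proj \<phi> K x" unfolding w_def using proj_ne[OF N K] by (rule someI_ex)
  define S where "S = {s'::real. phi_dist \<phi> K (w + s' *\<^sub>R (x - w)) = s' * phi_dist \<phi> K x}"
  have "phi_reach \<phi> K x = Sup (ereal ` S)" by (simp add: phi_reach_def Let_def w_def S_def)
  with r(2) obtain z where z: "z \<in> S" "ereal r < ereal z" by (auto simp: less_Sup_iff)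
  have eq: "phi_dist \<phi> K (w + r *\<^sub>R (x - w)) = r * phi_dist \<phi> K x"
    by (rule reach_interval[OF N K w, of r z]) (use z r in \<open>auto simp: S_def\<close>)
  have "phi_proj \<phi> K x = {w}" using proj_single[OF N SC K w d r(1) eq] w by blast
  then show ?thesis using eq by blast
qed

theorem corollary3p3:
  fixes \<phi> :: "'a::euclidean_space \<Rightarrow> real"
    and K :: "'a set" and s t lam :: real
  assumes "strictly_convex_norm \<phi>"
    and "closed K" and "K \<noteq> {}"
    and "0 < s" and "s < t"
    and "1 < lam"
  shows "(\<forall>x \<in> {x. phi_reach \<phi> K x \<ge> ereal lam \<and> s \<le> phi_dist \<phi> K x \<and> phi_dist \<phi> K x \<le> t}.
            \<exists>w. phi_proj \<phi> K x = {w})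
       \<and> uniformly_continuous_on
           {x. phi_reach \<phi> K x \<ge> ereal lam \<and> s \<le> phi_dist \<phi> K x \<and> phi_dist \<phi> K x \<le> t}
           (\<lambda>x. the_elem (phi_proj \<phi> K x))"
proof -
  have N: "is_norm \<phi>" and SC: "\<forall>a b. \<phi> (a + b) = \<phi> a + \<phi> b \<longrightarrow> \<phi> b *\<^sub>R a = \<phi> a *\<^sub>R b"
    using assms(1) by (auto simp: strictly_convex_norm_def)
  have K: "closed K" "K \<noteq> {}" using assms(2,3) by auto
  define S where "S = {x. phi_reach \<phi> K x \<ge> ereal lam \<and> s \<le> phi_dist \<phi> K x \<and> phi_dist \<phi> K x \<le> t}"
  define r where "r = (1 + lam) / 2"
  have r1: "1 < r" and rl: "r < lam" using assms(6) by (auto simp: r_def)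
  have G: "\<exists>w. phi_proj \<phi> K x = {w} \<and> phi_dist \<phi> K (w + r *\<^sub>R (x - w)) = r * phi_dist \<phi> K x"
    if "x \<in> S" for x
  proof (rule good[OF N SC K r1])
    have "ereal r < ereal lam" using rl by simp
    moreover have "ereal lam \<le> phi_reach \<phi> K x" using that by (simp add: S_def)
    ultimately show "ereal r < phi_reach \<phi> K x" by (rule order_less_le_trans)
    show "phi_dist \<phi> K x > 0" using that assms(4) by (auto simp: S_def)
  qed
  have part1: "\<forall>x\<in>S. \<exists>w. phi_proj \<phi> K x = {w}" using G by blast
  have part2: "uniformly_continuous_on S (\<lambda>x. the_elem (phi_proj \<phi> K x))"
    unfolding uniformly_continuous_on_def
  proof (intro allI impI)
    fix e :: real assume e: "e > 0"
    obtain c where c: "c > 0" "\<And>x. c * norm x \<le> \<phi> x" using nrm_lower[OF N] by blast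
    obtain C where C: "C > 0" "\<And>x. \<phi> x \<le> C * norm x" using nrm_upper[OF N] by blast
    define M where "M = r * t + 1"
    define \<epsilon> where "\<epsilon> = (r - 1) * s * c * e / 2"
    have \<epsilon>0: "\<epsilon> > 0" using r1 assms(4) c e by (simp add: \<epsilon>_def)
    obtain \<gamma> where \<gamma>: "\<gamma> > 0" "\<And>a b. \<phi> a \<le> M \<Longrightarrow> \<phi> b \<le> M \<Longrightarrow> \<phi> a + \<phi> b - \<phi> (a + b) < \<gamma>
           \<Longrightarrow> \<phi> (\<phi> b *\<^sub>R a - \<phi> a *\<^sub>R b) < \<epsilon>"
      using sc_modulus[OF N SC \<epsilon>0, of M] by blast
    define \<eta> where "\<eta> = min 1 (min (\<gamma> / 2) (c * e / 4))"
    have \<eta>0: "\<eta> > 0" using \<gamma> c e by (simp add: \<eta>_def)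
    show "\<exists>d>0. \<forall>x\<in>S. \<forall>x'\<in>S. dist x' x < d \<longrightarrow>
            dist (the_elem (phi_proj \<phi> K x')) (the_elem (phi_proj \<phi> K x)) < e"
    proof (intro exI[of _ "\<eta> / C"] conjI ballI impI)
      show "\<eta> / C > 0" using \<eta>0 C by simp
      fix x2 x1 assume x2: "x2 \<in> S" and x1: "x1 \<in> S" and dx: "dist x1 x2 < \<eta> / C"
      obtain w1 where w1: "phi_proj \<phi> K x1 = {w1}"
        and y1: "phi_dist \<phi> K (w1 + r *\<^sub>R (x1 - w1)) = r * phi_dist \<phi> K x1" using G[OF x1] by blast
      obtain w2 where w2: "phi_proj \<phi> K x2 = {w2}" using G[OF x2] by blast
      define d1 where "d1 = phi_dist \<phi> K x1"
      define d2 where "d2 = phi_dist \<phi> K x2"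
      define h where "h = x1 - x2"
      define u1 where "u1 = x1 - w1"
      define a where "a = x1 - w2"
      define b where "b = (r - 1) *\<^sub>R u1"
      have d1s: "s \<le> d1" "d1 \<le> t" using x1 by (auto simp: S_def d1_def)
      have d2t: "d2 \<le> t" using x2 by (auto simp: S_def d2_def)
      have w1K: "w1 \<in> K" and pu1: "\<phi> u1 = d1" using w1 by (auto simp: phi_proj_def u1_def d1_def)
      have w2K: "w2 \<in> K" and pw2: "\<phi> (x2 - w2) = d2" using w2 by (auto simp: phi_proj_def d2_def)
      have ph: "\<phi> h < \<eta>"
      proof -
        have "\<phi> h \<le> C * norm h" by (rule C(2))
        also have "\<dots> < C * (\<eta> / C)" using dx C(1) unfolding h_def dist_norm
          by (intro mult_strict_left_mono) auto
        also have "\<dots> = \<eta>" using C(1) by simp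
        finally show ?thesis .
      qed
      have pa1: "d1 \<le> \<phi> a" using pd_le[OF N w2K, of x1] nrm_sym[OF N, of w2 x1] by (simp add: d1_def a_def)
      have pa2: "\<phi> a \<le> d2 + \<phi> h"
        using nrm_tri[OF N, of "x2 - w2" h] pw2 by (simp add: a_def h_def)
      have dd: "d2 \<le> d1 + \<phi> h"
        using pd_lip[OF N K, of x2 x1] nrm_sym[OF N, of x2 x1] by (simp add: d1_def d2_def h_def)
      have pb: "\<phi> b = (r - 1) * d1" using nrm_scale[OF N, of "r - 1" u1] pu1 r1 by (simp add: b_def)
      have ab: "a + b = (w1 + r *\<^sub>R (x1 - w1)) - w2" by (simp add: a_def b_def u1_def algebra_simps)
      have pab: "r * d1 \<le> \<phi> (a + b)"
        using pd_le[OF N w2K, of "w1 + r *\<^sub>R (x1 - w1)"] y1 ab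
          nrm_sym[OF N, of w2 "w1 + r *\<^sub>R (x1 - w1)"] by (simp add: d1_def)
      have ph1: "\<phi> h \<le> 1" "2 * \<phi> h < \<gamma>" using ph unfolding \<eta>_def by auto
      have "t \<le> r * t" using r1 assms(4,5) by simp
      then have "\<phi> a \<le> M" using pa2 d2t ph1 unfolding M_def by linarith
      moreover have "\<phi> b \<le> M"
      proof -
        have "(r - 1) * d1 \<le> (r - 1) * t" using d1s r1 by (intro mult_left_mono) auto
        then show ?thesis using pb assms(4,5) unfolding M_def by (simp add: algebra_simps)
      qed
      moreover have "\<phi> a + \<phi> b - \<phi> (a + b) < \<gamma>"
      proof -
        have "(r - 1) * d1 = r * d1 - d1" by (simp add: algebra_simps)
        then show ?thesis using pa2 pb pab dd ph1 by linarith
      qed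
      ultimately have key: "\<phi> (\<phi> b *\<^sub>R a - \<phi> a *\<^sub>R b) < \<epsilon>" by (rule \<gamma>(2))
      have "\<phi> b *\<^sub>R a - \<phi> a *\<^sub>R b = (r - 1) *\<^sub>R (d1 *\<^sub>R a - \<phi> a *\<^sub>R u1)"
      proof -
        have "\<phi> b *\<^sub>R a - \<phi> a *\<^sub>R b = ((r - 1) * d1) *\<^sub>R a - \<phi> a *\<^sub>R ((r - 1) *\<^sub>R u1)"
          unfolding pb by (simp add: b_def)
        then show ?thesis by (simp add: algebra_simps)
      qed
      then have "\<phi> (\<phi> b *\<^sub>R a - \<phi> a *\<^sub>R b) = (r - 1) * \<phi> (d1 *\<^sub>R a - \<phi> a *\<^sub>R u1)"
        using nrm_scale[OF N] r1 by simp
      with key have k2: "(r - 1) * \<phi> (d1 *\<^sub>R a - \<phi> a *\<^sub>R u1) < \<epsilon>" by simp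
      have k3: "\<phi> (d1 *\<^sub>R a - \<phi> a *\<^sub>R u1) < s * c * e / 2"
      proof -
        have "(r - 1) * \<phi> (d1 *\<^sub>R a - \<phi> a *\<^sub>R u1) < (r - 1) * (s * c * e / 2)"
          using k2 by (simp add: \<epsilon>_def mult.assoc)
        then show ?thesis using r1 by (simp add: mult_less_cancel_left_pos)
      qed
      have wdiff: "w1 - w2 = a - u1" by (simp add: a_def u1_def)
      have "d1 *\<^sub>R (a - u1) = (d1 *\<^sub>R a - \<phi> a *\<^sub>R u1) + (\<phi> a - d1) *\<^sub>R u1"
        by (simp add: algebra_simps)
      then have "\<phi> (d1 *\<^sub>R (a - u1)) \<le> \<phi> (d1 *\<^sub>R a - \<phi> a *\<^sub>R u1) + \<phi> ((\<phi> a - d1) *\<^sub>R u1)"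
        using nrm_tri[OF N] by metis
      also have "\<phi> ((\<phi> a - d1) *\<^sub>R u1) = (\<phi> a - d1) * d1" using nrm_scale[OF N] pu1 pa1 by simp
      also have "\<dots> \<le> 2 * \<phi> h * d1" using pa2 dd d1s assms(4) by (intro mult_right_mono) auto
      finally have "d1 * \<phi> (a - u1) < s * c * e / 2 + 2 * \<phi> h * d1"
        using k3 nrm_scale[OF N, of d1] d1s assms(4) by simp
      moreover have "s * c * e / 2 \<le> d1 * c * e / 2" using d1s c e by simp
      ultimately have "d1 * \<phi> (a - u1) < d1 * (c * e / 2 + 2 * \<phi> h)" by (simp add: algebra_simps)
      then have "\<phi> (a - u1) < c * e / 2 + 2 * \<phi> h" using d1s assms(4) by simp
      also have "\<dots> \<le> c * e" using ph unfolding \<eta>_def by simp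
      finally have "c * norm (a - u1) < c * e" using c(2)[of "a - u1"] by linarith
      then have "norm (w1 - w2) < e" using c(1) wdiff by simp
      then show "dist (the_elem (phi_proj \<phi> K x1)) (the_elem (phi_proj \<phi> K x2)) < e"
        using w1 w2 by (simp add: dist_norm)
    qed
  qed
  show ?thesis using part1 part2 unfolding S_def by blast
qed

end
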